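(* Let $k\ge 3$ and consider $k$ processes $P_0,\dots,P_{k-1}$ with inputs $v_0,\dots,v_{k-1}$ that are pairwise different, running the following algorithm on a single shared $\text{WRN}_{k}$ object: process $P_i$ performs $t\gets\texttt{WRN}(i,v_i)$ and then decides $t$ if $t\neq\bot$, and decides $v_i$ otherwise. Then in every execution at most $k-1$ distinct values are decided.
   Context: A $\text{WRN}_{k}$ (Write and Read Next) object is a deterministic atomic shared object with a single operation $\texttt{WRN}(i,v)$, where $i\in\{0,\dots,k-1\}$ and $v\neq\bot$. Its state consists of $k$ values $A[0],\dots,A[k-1]$, initially all $\bot$; the operation $\texttt{WRN}(i,v)$ atomically sets $A[i]\gets v$ and returns $A[(i+1)\bmod k]$. Executions are arbitrary asynchronous interleavings of the processes' atomic operations; processes may crash. *)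

theory Defs
  imports Main
begin

text \<open>State of a WRN_k object: the array A, with None playing the role of bottom.\<close>
type_synonym 'v wrn_state = "nat \<Rightarrow> 'v option"

definition wrn :: "nat \<Rightarrow> 'v wrn_state \<Rightarrow> nat \<Rightarrow> 'v \<Rightarrow> 'v wrn_state \<times> 'v option" where
  "wrn k A i x = (A(i := Some x), A ((i + 1) mod k))"

definition decide :: "('v option) \<Rightarrow> 'v \<Rightarrow> 'v" where
  "decide t x = (case t of Some y \<Rightarrow> y | None \<Rightarrow> x)"

text \<open>Running the algorithm along a schedule: the schedule lists the processes in the
  order in which they perform their (single) atomic WRN step; processes not listed
  have crashed before taking their step.\<close>
fun run :: "nat \<Rightarrow> (nat \<Rightarrow> 'v) \<Rightarrow> nat list \<Rightarrow> 'v wrn_state \<Rightarrow> (nat \<Rightarrow> 'v option)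
            \<Rightarrow> 'v wrn_state \<times> (nat \<Rightarrow> 'v option)" where
  "run k v [] A D = (A, D)"
| "run k v (i # is) A D =
     (let (A', t) = wrn k A i (v i) in run k v is A' (D(i := Some (decide t (v i)))))"

definition decisions :: "nat \<Rightarrow> (nat \<Rightarrow> 'v) \<Rightarrow> nat list \<Rightarrow> nat \<Rightarrow> 'v option" where
  "decisions k v sched = snd (run k v sched (\<lambda>_. None) (\<lambda>_. None))"

definition valid_schedule :: "nat \<Rightarrow> nat list \<Rightarrow> bool" where
  "valid_schedule k sched \<longleftrightarrow> distinct sched \<and> set sched \<subseteq> {..<k}"

end

theory Submission
  imports Defs
begin

lemma run_append:
  "run k v (xs @ ys) A D = (case run k v xs A D of (A', D') \<Rightarrow> run k v ys A' D')"
  by (induction xs arbitrary: A D) (auto simp: wrn_def split: prod.splits)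

lemma run_fst:
  "fst (run k v xs A D) j = (if j \<in> set xs then Some (v j) else A j)"
  by (induction xs arbitrary: A D) (auto simp: wrn_def)

lemma run_snd_notin:
  "i \<notin> set xs \<Longrightarrow> snd (run k v xs A D) i = D i"
  by (induction xs arbitrary: A D) (auto simp: wrn_def)

lemma run_dom:
  "dom (snd (run k v xs A D)) = dom D \<union> set xs"
  by (induction xs arbitrary: A D) (auto simp: wrn_def)

lemma ran_img: "ran D = (\<lambda>i. the (D i)) ` dom D"
  by (auto simp: ran_def dom_def image_def)

theorem corollary8:
  fixes k :: nat and v :: "nat \<Rightarrow> 'v" and sched :: "nat list"
  assumes "k \<ge> 3"
    and "inj_on v {..<k}"
    and "valid_schedule k sched"
  shows "card (ran (decisions k v sched)) \<le> k - 1"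
proof -
  let ?D = "decisions k v sched"
  let ?g = "\<lambda>i. the (?D i)"
  let ?S = "set sched"
  have dist: "distinct sched" and sub: "?S \<subseteq> {..<k}"
    using assms(3) by (auto simp: valid_schedule_def)
  have domD: "dom ?D = ?S" unfolding decisions_def using run_dom[of k v sched] by auto
  have ranD: "ran ?D = ?g ` ?S" using ran_img[of ?D] domD by simp
  have finS: "finite ?S" by simp
  have cardS: "card ?S \<le> k" using card_mono[OF _ sub] by simp
  show ?thesis
  proof (cases "?S = {..<k}")
    case False
    then have "card ?S \<noteq> k" using sub card_subset_eq[of "{..<k}" ?S] by auto
    then have "card ?S < k" using cardS by simp
    then show ?thesis using ranD card_image_le[OF finS, of ?g] by simp
  next
    case True
    have "0 \<in> ?S" using True assms(1) by simp
    then have "sched \<noteq> []" by (cases sched) simp_all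
    then obtain f rest where sf: "sched = f # rest" by (cases sched) auto
    have fk: "f < k" using sub sf by simp
    define p where "p = (f + k - 1) mod k"
    have pk: "p < k" using p_def assms(1) by simp
    have pf: "(p + 1) mod k = f"
    proof -
      have "(p + 1) mod k = ((f + k - 1) + 1) mod k" unfolding p_def by (simp add: mod_Suc_eq)
      also have "\<dots> = (f + k) mod k" using assms(1) by simp
      also have "\<dots> = f" using fk by simp
      finally show ?thesis .
    qed
    have pnf: "p \<noteq> f"
    proof
      assume "p = f"
      then have "(f + 1) mod k = f" using pf by simp
      moreover have "(f + 1) mod k = (if f + 1 = k then 0 else f + 1)" using fk by auto
      ultimately show False using fk assms(1) by (auto split: if_splits)
    qed
    have Df: "?D f = Some (v f)"
      using dist sf run_snd_notin[of f rest k v]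
      by (simp add: decisions_def wrn_def decide_def)
    have "p \<in> set rest" using True pk pnf sf by auto
    then obtain xs ys where rs: "rest = xs @ p # ys" by (meson split_list)
    have pys: "p \<notin> set ys" using dist sf rs by auto
    obtain A1 D1 where r1: "run k v (f # xs) Map.empty Map.empty = (A1, D1)"
      by (cases "run k v (f # xs) Map.empty Map.empty") auto
    have A1f: "A1 f = Some (v f)" using run_fst[of k v "f # xs" Map.empty Map.empty f] r1 by simp
    have "?D p = snd (run k v (p # ys) A1 D1) p"
      unfolding decisions_def using sf rs r1 run_append[of k v "f # xs" "p # ys"]
      by simp
    also have "\<dots> = Some (v f)"
      using A1f pf by (simp add: wrn_def decide_def run_snd_notin[OF pys])
    finally have Dp: "?D p = Some (v f)" .
    have gpf: "?g p = ?g f" using Dp Df by simp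
    have fin: "f \<in> ?S - {p}" using sf pnf by auto
    have "?g ` ?S = ?g ` (?S - {p})"
      using gpf fin by (auto simp: image_def)
    then have "card (ran ?D) \<le> card (?S - {p})"
      using ranD card_image_le[of "?S - {p}" ?g] by simp
    also have "\<dots> = card ?S - 1" using True pk by simp
    finally show ?thesis using cardS by simp
  qed
qed

end
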